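(* Let $\bm{A}=[\bm{A}_1\ \bm{A}_2]$ have full column rank with $\bm{A}_j^\top\bm{A}_j=\bm{I}_j$ and $\bm{C}:=\bm{A}_2^\top\bm{A}_1\ne0$. Let $\gamma_1^*:=\dfrac{2}{1+\sqrt{1-\lambda_1(\bm{C}\bm{C}^\top)}}$. Then $\gamma_1^*-1<\rho(\bm{M}(1,1))$ and $\min_{\gamma_1>0}\rho(\bm{M}(\gamma_1,\gamma_1))=\rho(\bm{M}(\gamma_1^*,\gamma_1^* ))=\gamma_1^*-1.$
   Context: $\rho$: spectral radius; $\lambda_1$: largest eigenvalue. $\bm{M}(\gamma_1,\gamma_2)=\begin{bmatrix}(1-\gamma_1)\bm{I}_1&-\gamma_1\bm{C}^\top\\-\gamma_2(1-\gamma_1)\bm{C}&(1-\gamma_2)\bm{I}_2+\gamma_1\gamma_2\bm{C}\bm{C}^\top\end{bmatrix}$, the two-block gradient descent iteration matrix with stepsizes $\gamma_1,\gamma_2$. *)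

theory Defs
  imports "Jordan_Normal_Form.Spectral_Radius"
begin

definition hcat :: "real mat \<Rightarrow> real mat \<Rightarrow> real mat" where
  "hcat A1 A2 = mat (dim_row A1) (dim_col A1 + dim_col A2)
     (\<lambda>(i,j). if j < dim_col A1 then A1 $$ (i,j) else A2 $$ (i, j - dim_col A1))"

definition full_column_rank :: "real mat \<Rightarrow> bool" where
  "full_column_rank A \<longleftrightarrow>
     (\<forall>x \<in> carrier_vec (dim_col A). A *\<^sub>v x = 0\<^sub>v (dim_row A) \<longrightarrow> x = 0\<^sub>v (dim_col A))"

definition lambda_max :: "real mat \<Rightarrow> real" where
  "lambda_max S = Max {x. eigenvalue S x}"

definition rho :: "real mat \<Rightarrow> real" where
  "rho M = spectral_radius (map_mat complex_of_real M)"

definition iterM :: "real mat \<Rightarrow> real \<Rightarrow> real \<Rightarrow> real mat" where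
  "iterM C g1 g2 = (let n1 = dim_col C; n2 = dim_row C in
     four_block_mat
       ((1 - g1) \<cdot>\<^sub>m 1\<^sub>m n1)             (- g1 \<cdot>\<^sub>m transpose_mat C)
       (- (g2 * (1 - g1)) \<cdot>\<^sub>m C)         ((1 - g2) \<cdot>\<^sub>m 1\<^sub>m n2 + (g1 * g2) \<cdot>\<^sub>m (C * transpose_mat C)))"

end

theory Submission
  imports Defs
begin

abbreviation cr :: "real \<Rightarrow> complex" where "cr \<equiv> complex_of_real"

lemma char_matrix_map:
  assumes A: "A \<in> carrier_mat n n"
  shows "char_matrix (map_mat cr A) (cr t) = map_mat cr (char_matrix A t)"
  by (rule eq_matI, insert A, auto simp: char_matrix_def)

lemma eigenvalue_real_of_complex:
  assumes A: "A \<in> carrier_mat n n" and ev: "eigenvalue (map_mat cr A) (cr t)"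
  shows "eigenvalue A t"
proof -
  have "det (char_matrix (map_mat cr A) (cr t)) = 0"
    using ev eigenvalue_det[of "map_mat cr A" n] A by auto
  hence "cr (det (char_matrix A t)) = 0"
    unfolding char_matrix_map[OF A] of_real_hom.hom_det .
  hence "det (char_matrix A t) = 0" by simp
  thus ?thesis using eigenvalue_det[OF A] by auto
qed

lemma conj_real_mat_vec:
  assumes B: "B \<in> carrier_mat n m" and z: "z \<in> carrier_vec m"
  shows "map_mat cr B *\<^sub>v conjugate z = conjugate (map_mat cr B *\<^sub>v z)"
proof (rule eq_vecI)
  fix i assume i: "i < dim_vec (conjugate (map_mat cr B *\<^sub>v z))"
  hence i: "i < n" using B by auto
  have "conjugate (row (map_mat cr B) i \<bullet> z) = conjugate (row (map_mat cr B) i) \<bullet> conjugate z"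
    by (rule conjugate_sprod_vec[of _ m], insert B z i, auto)
  also have "conjugate (row (map_mat cr B) i) = row (map_mat cr B) i"
    by (rule eq_vecI, insert B i, auto)
  finally show "(map_mat cr B *\<^sub>v conjugate z) $ i = conjugate (map_mat cr B *\<^sub>v z) $ i"
    using i B z by auto
qed (insert B, auto)

lemma herm_eigenvalue:
  fixes B :: "real mat"
  assumes B: "B \<in> carrier_mat n m"
    and ev: "eigenvalue (map_mat cr (B * transpose_mat B)) mu"
  shows "Im mu = 0 \<and> Re mu \<ge> 0"
proof -
  let ?B = "map_mat cr B" let ?Bt = "map_mat cr (transpose_mat B)"
  have Bc: "?B \<in> carrier_mat n m" and Btc: "?Bt \<in> carrier_mat m n" using B by auto
  have tr: "transpose_mat ?Bt = ?B" by auto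
  have BB: "map_mat cr (B * transpose_mat B) = ?B * ?Bt"
    using of_real_hom.mat_hom_mult[OF B, of "transpose_mat B" n] B by auto
  from ev obtain z where z: "z \<in> carrier_vec n" "z \<noteq> 0\<^sub>v n"
    and eq: "(?B * ?Bt) *\<^sub>v z = mu \<cdot>\<^sub>v z"
    unfolding eigenvalue_def eigenvector_def BB using B by auto
  let ?u = "?Bt *\<^sub>v z"
  have u: "?u \<in> carrier_vec m" using Btc z by auto
  have "(mu \<cdot>\<^sub>v z) \<bullet>c z = (?B *\<^sub>v ?u) \<bullet>c z"
    using eq Bc Btc z by auto
  also have "\<dots> = (transpose_mat ?Bt *\<^sub>v ?u) \<bullet> conjugate z" by (simp only: tr)
  also have "\<dots> = ?u \<bullet> (?Bt *\<^sub>v conjugate z)"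
    by (rule transpose_vec_mult_scalar[OF Btc], insert z u, auto)
  also have "?Bt *\<^sub>v conjugate z = conjugate ?u"
    by (rule conj_real_mat_vec[OF _ z(1)], insert B, auto)
  finally have e: "mu * (z \<bullet>c z) = ?u \<bullet>c ?u" using z by auto
  have pos: "z \<bullet>c z > 0" using z by auto
  have nn: "?u \<bullet>c ?u \<ge> 0" by auto
  from pos have "Im (z \<bullet>c z) = 0" "Re (z \<bullet>c z) > 0" by (auto simp: less_complex_def)
  moreover from nn have "Im (?u \<bullet>c ?u) = 0" "Re (?u \<bullet>c ?u) \<ge> 0" by (auto simp: less_eq_complex_def)
  ultimately obtain a b where ab: "z \<bullet>c z = cr a" "?u \<bullet>c ?u = cr b" "a > 0" "b \<ge> 0"
  proof -
    assume r: "\<And>a b. z \<bullet>c z = cr a \<Longrightarrow> ?u \<bullet>c ?u = cr b \<Longrightarrow> a > 0 \<Longrightarrow> b \<ge> 0 \<Longrightarrow> thesis"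
    assume h: "Im (z \<bullet>c z) = 0" "Re (z \<bullet>c z) > 0" "Im (?u \<bullet>c ?u) = 0" "Re (?u \<bullet>c ?u) \<ge> 0"
    show thesis
      by (rule r[of "Re (z \<bullet>c z)" "Re (?u \<bullet>c ?u)"], insert h, auto simp: complex_eq_iff)
  qed
  have "mu = cr (b / a)" using e ab by (auto simp: field_simps)
  thus ?thesis using ab by auto
qed

lemma strict_ut_pow:
  fixes B :: "'a :: comm_ring_1 mat"
  assumes B: "B \<in> carrier_mat n n" and z: "\<And>i j. i < n \<Longrightarrow> j < n \<Longrightarrow> j \<le> i \<Longrightarrow> B $$ (i,j) = 0"
  shows "B ^\<^sub>m n = 0\<^sub>m n n"
proof -
  have main: "\<And>i j. i < n \<Longrightarrow> j < n \<Longrightarrow> j < i + k \<Longrightarrow> (B ^\<^sub>m k) $$ (i,j) = 0" for k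
  proof (induct k)
    case 0 thus ?case using B by auto
  next
    case (Suc k)
    have "(B ^\<^sub>m Suc k) $$ (i,j) = row (B ^\<^sub>m k) i \<bullet> col B j"
      using Suc.prems B by auto
    also have "\<dots> = (\<Sum>l<n. (B ^\<^sub>m k) $$ (i,l) * B $$ (l,j))"
      unfolding scalar_prod_def using Suc.prems B by (auto intro!: sum.cong simp: lessThan_atLeast0)
    also have "\<dots> = 0"
    proof (rule sum.neutral, intro ballI)
      fix l assume l: "l \<in> {..<n}"
      show "(B ^\<^sub>m k) $$ (i,l) * B $$ (l,j) = 0"
      proof (cases "l < i + k")
        case True thus ?thesis using Suc l by auto
      next
        case False thus ?thesis using Suc.prems l z[of l j] by auto
      qed
    qed
    finally show ?case .
  qed
  show ?thesis by (rule eq_matI, insert B main[of _ _ n], auto)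
qed

lemma real_vec_sq0:
  fixes v :: "real vec"
  assumes "v \<in> carrier_vec n" and "v \<bullet> v = 0" shows "v = 0\<^sub>v n"
  using conjugate_square_eq_0_vec[OF assms(1)] assms(2) by simp

lemma sym_sq_zero:
  fixes S :: "real mat"
  assumes S: "S \<in> carrier_mat n n" and sym: "transpose_mat S = S"
    and u: "u \<in> carrier_vec n" and z: "S *\<^sub>v (S *\<^sub>v u) = 0\<^sub>v n"
  shows "S *\<^sub>v u = 0\<^sub>v n"
proof -
  have "(S *\<^sub>v u) \<bullet> (S *\<^sub>v u) = (transpose_mat S *\<^sub>v (S *\<^sub>v u)) \<bullet> u"
    by (rule transpose_vec_mult_scalar[symmetric, OF S u], insert S u, auto)
  also have "\<dots> = 0" unfolding sym z using u by simp
  finally show ?thesis by (rule real_vec_sq0[rotated], insert S u, auto)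
qed

lemma sym_nilpotent:
  fixes S :: "real mat"
  assumes S: "S \<in> carrier_mat n n" and sym: "transpose_mat S = S"
    and nil: "S ^\<^sub>m k = 0\<^sub>m n n"
  shows "S = 0\<^sub>m n n"
proof -
  have main: "\<And>u. u \<in> carrier_vec n \<Longrightarrow> S ^\<^sub>m (Suc j) *\<^sub>v u = 0\<^sub>v n \<Longrightarrow> S *\<^sub>v u = 0\<^sub>v n" for j
  proof (induct j)
    case 0 thus ?case using S by auto
  next
    case (Suc j)
    have "S ^\<^sub>m (Suc (Suc j)) = S ^\<^sub>m (Suc j) * S" by simp
    hence "S ^\<^sub>m (Suc j) *\<^sub>v (S *\<^sub>v u) = 0\<^sub>v n" using Suc.prems S
      by (metis assoc_mult_mat_vec pow_carrier_mat)
    from Suc.hyps[OF _ this] have "S *\<^sub>v (S *\<^sub>v u) = 0\<^sub>v n" using S Suc.prems by auto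
    thus ?case by (rule sym_sq_zero[OF S sym Suc.prems(1)])
  qed
  have all: "S *\<^sub>v u = 0\<^sub>v n" if u: "u \<in> carrier_vec n" for u
  proof -
    have "S ^\<^sub>m (Suc k) = S ^\<^sub>m k * S" by simp
    hence "S ^\<^sub>m (Suc k) = 0\<^sub>m n n" unfolding nil using S by simp
    hence "S ^\<^sub>m (Suc k) *\<^sub>v u = 0\<^sub>v n" using u by (auto intro!: eq_vecI simp: scalar_prod_def)
    thus ?thesis by (rule main[OF u])
  qed
  show ?thesis
  proof (rule eq_matI)
    fix i j assume i: "i < dim_row (0\<^sub>m n n)" and j: "j < dim_col (0\<^sub>m n n)"
    have "S *\<^sub>v unit_vec n j = col S j" using S j by auto
    hence "col S j = 0\<^sub>v n" using all[of "unit_vec n j"] j by auto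
    hence "col S j $ i = 0" using i by auto
    thus "S $$ (i,j) = 0\<^sub>m n n $$ (i,j)" using i j S by auto
  qed (insert S, auto)
qed

lemma CCt_zero:
  fixes C :: "real mat"
  assumes C: "C \<in> carrier_mat n2 n1" and z: "C * transpose_mat C = 0\<^sub>m n2 n2"
  shows "C = 0\<^sub>m n2 n1"
proof (rule eq_matI)
  fix i j assume i: "i < dim_row (0\<^sub>m n2 n1)" and j: "j < dim_col (0\<^sub>m n2 n1)"
  have "row C i \<bullet> row C i = (C * transpose_mat C) $$ (i,i)" using C i by auto
  also have "\<dots> = 0" using z i by auto
  finally have "row C i = 0\<^sub>v n1" by (rule real_vec_sq0[rotated], insert C i, auto)
  hence "row C i $ j = 0" using j by auto
  thus "C $$ (i,j) = 0\<^sub>m n2 n1 $$ (i,j)" using i j C by auto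
qed (insert C, auto)

lemma CCt_sym: fixes C :: "real mat" assumes C: "C \<in> carrier_mat n2 n1"
  shows "transpose_mat (C * transpose_mat C) = C * transpose_mat C"
  using transpose_mult[OF C, of "transpose_mat C" n2] C by auto

lemma complex_eig_S:
  fixes C :: "real mat"
  assumes C: "C \<in> carrier_mat n2 n1"
    and ev: "eigenvalue (map_mat cr (C * transpose_mat C)) mu"
  shows "mu = cr (Re mu) \<and> Re mu \<ge> 0 \<and> eigenvalue (C * transpose_mat C) (Re mu)"
proof -
  from herm_eigenvalue[OF C ev] have h: "Im mu = 0" "Re mu \<ge> 0" by auto
  hence mu: "mu = cr (Re mu)" by (simp add: complex_eq_iff)
  have "eigenvalue (C * transpose_mat C) (Re mu)"
    by (rule eigenvalue_real_of_complex[of _ n2], insert C ev mu, auto)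
  with h mu show ?thesis by auto
qed

lemma lambda_facts:
  fixes C :: "real mat"
  assumes C: "C \<in> carrier_mat n2 n1" and nz: "C \<noteq> 0\<^sub>m n2 n1"
  shows "eigenvalue (C * transpose_mat C) (lambda_max (C * transpose_mat C))"
    "\<And>t. eigenvalue (C * transpose_mat C) t \<Longrightarrow> t \<le> lambda_max (C * transpose_mat C)"
    "lambda_max (C * transpose_mat C) > 0"
proof -
  define S where "S = C * transpose_mat C"
  have S: "S \<in> carrier_mat n2 n2" using C unfolding S_def by auto
  have n2: "n2 > 0" using nz C by (cases n2, auto)
  have fin: "finite {x. eigenvalue S x}"
    using card_finite_spectrum(1)[OF S] unfolding spectrum_def by simp
  from spectrum_non_empty[of "map_mat cr S" n2] S n2 obtain mu
    where "eigenvalue (map_mat cr S) mu" unfolding spectrum_def by auto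
  from complex_eig_S[OF C this[unfolded S_def]] have ne: "{x. eigenvalue S x} \<noteq> {}"
    unfolding S_def by auto
  show ev: "eigenvalue (C * transpose_mat C) (lambda_max (C * transpose_mat C))"
    using Max_in[OF fin ne] unfolding lambda_max_def S_def by auto
  show le: "\<And>t. eigenvalue (C * transpose_mat C) t \<Longrightarrow> t \<le> lambda_max (C * transpose_mat C)"
    using Max_ge[OF fin] unfolding lambda_max_def S_def by auto
  show "lambda_max (C * transpose_mat C) > 0"
  proof (rule ccontr)
    assume "\<not> ?thesis"
    hence nonpos: "\<And>t. eigenvalue S t \<Longrightarrow> t \<le> 0" using le unfolding S_def by force
    have zero: "mu = 0" if "eigenvalue (map_mat cr S) mu" for mu
    proof -
      from complex_eig_S[OF C that[unfolded S_def]] have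
        h: "mu = cr (Re mu)" "Re mu \<ge> 0" "eigenvalue S (Re mu)" unfolding S_def by auto
      from nonpos[OF h(3)] h(2) have "Re mu = 0" by auto
      with h(1) show ?thesis by simp
    qed
    let ?A = "map_mat cr S"
    have A: "?A \<in> carrier_mat n2 n2" using S by auto
    from char_poly_factorized[OF A] obtain es where
      cp: "char_poly ?A = (\<Prod>a\<leftarrow>es. [:- a, 1:])" and len: "length es = n2" by auto
    have es0: "e = 0" if "e \<in> set es" for e
    proof -
      have "poly (char_poly ?A) e = 0" unfolding cp by (rule linear_poly_root[OF that])
      hence "eigenvalue ?A e" using eigenvalue_root_char_poly[OF A] by auto
      thus ?thesis by (rule zero)
    qed
    obtain B P Q where sd: "schur_decomposition ?A es = (B,P,Q)" using prod_cases3 by blast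
    from schur_decomposition[OF A cp sd] have sim: "similar_mat_wit ?A B P Q"
      and ut: "upper_triangular B" and dg: "diag_mat B = es" by auto
    from sim have "{?A,B,P,Q} \<subseteq> carrier_mat (dim_row ?A) (dim_row ?A)"
      unfolding similar_mat_wit_def Let_def by blast
    hence B: "B \<in> carrier_mat n2 n2" and P: "P \<in> carrier_mat n2 n2" and Q: "Q \<in> carrier_mat n2 n2" using A by auto
    have Bz: "B ^\<^sub>m n2 = 0\<^sub>m n2 n2"
    proof (rule strict_ut_pow[OF B])
      fix i j assume i: "i < n2" and j: "j < n2" and ji: "j \<le> i"
      show "B $$ (i,j) = 0"
      proof (cases "j < i")
        case True thus ?thesis using ut i B unfolding upper_triangular_def by auto
      next
        case False
        hence "j = i" using ji by auto
        moreover have "es ! i = B $$ (i,i)" unfolding dg[symmetric] diag_mat_def using i B by simp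
        moreover have "es ! i \<in> set es" using i len by auto
        ultimately show ?thesis using es0 by auto
      qed
    qed
    have "?A ^\<^sub>m n2 = P * B ^\<^sub>m n2 * Q" by (rule similar_mat_wit_pow_id[OF sim])
    also have "\<dots> = 0\<^sub>m n2 n2" unfolding Bz using P Q by simp
    finally have "map_mat cr (S ^\<^sub>m n2) = map_mat cr (0\<^sub>m n2 n2)"
      unfolding of_real_hom.mat_hom_pow[OF S] by (auto intro!: eq_matI)
    hence "S ^\<^sub>m n2 = 0\<^sub>m n2 n2" by (rule of_real_hom.mat_hom_inj)
    from sym_nilpotent[OF S CCt_sym[OF C, folded S_def] this]
    have "C * transpose_mat C = 0\<^sub>m n2 n2" unfolding S_def .
    from CCt_zero[OF C this] nz show False by auto
  qed
qed

lemma hcat_mult_vec: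
  assumes A1: "A1 \<in> carrier_mat m n1" and A2: "A2 \<in> carrier_mat m n2"
    and a: "a \<in> carrier_vec n1" and b: "b \<in> carrier_vec n2"
  shows "hcat A1 A2 *\<^sub>v (a @\<^sub>v b) = A1 *\<^sub>v a + A2 *\<^sub>v b"
proof (rule eq_vecI)
  fix i assume i: "i < dim_vec (A1 *\<^sub>v a + A2 *\<^sub>v b)"
  hence i: "i < m" using A1 A2 by auto
  have r: "row (hcat A1 A2) i = row A1 i @\<^sub>v row A2 i"
    by (rule eq_vecI, insert A1 A2 i, auto simp: hcat_def)
  have "(hcat A1 A2 *\<^sub>v (a @\<^sub>v b)) $ i = row (hcat A1 A2) i \<bullet> (a @\<^sub>v b)"
    using i A1 by (auto simp: hcat_def)
  also have "\<dots> = row A1 i \<bullet> a + row A2 i \<bullet> b" unfolding r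
    by (rule scalar_prod_append, insert A1 A2 a b i, auto)
  finally show "(hcat A1 A2 *\<^sub>v (a @\<^sub>v b)) $ i = (A1 *\<^sub>v a + A2 *\<^sub>v b) $ i"
    using i A1 A2 by auto
qed (insert A1 A2, auto simp: hcat_def)

lemma lambda_lt_1:
  fixes A1 A2 :: "real mat"
  assumes A1: "A1 \<in> carrier_mat m n1" and A2: "A2 \<in> carrier_mat m n2"
    and fcr: "full_column_rank (hcat A1 A2)"
    and o1: "transpose_mat A1 * A1 = 1\<^sub>m n1"
    and o2: "transpose_mat A2 * A2 = 1\<^sub>m n2"
    and ev: "eigenvalue (transpose_mat A2 * A1 * transpose_mat (transpose_mat A2 * A1)) t"
  shows "t < 1"
proof (rule ccontr)
  assume "\<not> t < 1" hence t1: "t \<ge> 1" by auto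
  define C where "C = transpose_mat A2 * A1"
  have C: "C \<in> carrier_mat n2 n1" using A1 A2 unfolding C_def by auto
  have Ct: "transpose_mat C = transpose_mat A1 * A2"
    unfolding C_def using transpose_mult[of "transpose_mat A2" n2 m A1 n1] A1 A2 by auto
  from ev obtain v where v: "v \<in> carrier_vec n2" "v \<noteq> 0\<^sub>v n2"
    and eq: "(C * transpose_mat C) *\<^sub>v v = t \<cdot>\<^sub>v v"
    unfolding eigenvalue_def eigenvector_def C_def[symmetric] using C by auto
  define w where "w = A2 *\<^sub>v v"
  define u where "u = transpose_mat A1 *\<^sub>v w"
  define p where "p = A1 *\<^sub>v u"
  have w: "w \<in> carrier_vec m" and u: "u \<in> carrier_vec n1" and p: "p \<in> carrier_vec m"
    using A1 A2 v unfolding w_def u_def p_def by auto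
  have Ctv: "transpose_mat C *\<^sub>v v = u" unfolding Ct u_def w_def using A1 A2 v by auto
  have "t * (v \<bullet> v) = (t \<cdot>\<^sub>v v) \<bullet> v" using v by auto
  also have "\<dots> = (C *\<^sub>v u) \<bullet> v" unfolding eq[symmetric] Ctv[symmetric] using C v by auto
  also have "\<dots> = (transpose_mat (transpose_mat C) *\<^sub>v u) \<bullet> v" by simp
  also have "\<dots> = u \<bullet> u" unfolding Ctv[symmetric]
    by (rule transpose_vec_mult_scalar, insert C v u, auto)
  finally have e1: "t * (v \<bullet> v) = u \<bullet> u" .
  have "w \<bullet> w = (transpose_mat A2 *\<^sub>v w) \<bullet> v" unfolding w_def
    by (rule transpose_vec_mult_scalar[symmetric], insert A2 v, auto)
  also have "transpose_mat A2 *\<^sub>v w = v" unfolding w_def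
  proof -
    have "(transpose_mat A2 * A2) *\<^sub>v v = transpose_mat A2 *\<^sub>v (A2 *\<^sub>v v)"
      by (rule assoc_mult_mat_vec, insert A2 v, auto)
    thus "transpose_mat A2 *\<^sub>v (A2 *\<^sub>v v) = v" using o2 v by auto
  qed
  finally have e2: "w \<bullet> w = v \<bullet> v" .
  have wp: "w \<bullet> p = u \<bullet> u" unfolding p_def u_def
    by (rule transpose_vec_mult_scalar[symmetric], insert A1 w, auto)
  have pp: "p \<bullet> p = u \<bullet> u"
  proof -
    have "p \<bullet> p = (transpose_mat A1 *\<^sub>v p) \<bullet> u" unfolding p_def
      by (rule transpose_vec_mult_scalar[symmetric], insert A1 u, auto)
    also have "transpose_mat A1 *\<^sub>v p = u" unfolding p_def
    proof -
      have "(transpose_mat A1 * A1) *\<^sub>v u = transpose_mat A1 *\<^sub>v (A1 *\<^sub>v u)"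
        by (rule assoc_mult_mat_vec, insert A1 u, auto)
      thus "transpose_mat A1 *\<^sub>v (A1 *\<^sub>v u) = u" using o1 u by auto
    qed
    finally show ?thesis .
  qed
  have wpc: "w - p \<in> carrier_vec m" using w p by auto
  have "(w - p) \<bullet> (w - p) = w \<bullet> (w - p) - p \<bullet> (w - p)"
    by (rule minus_scalar_prod_distrib[OF w p wpc])
  also have "w \<bullet> (w - p) = w \<bullet> w - w \<bullet> p" by (rule scalar_prod_minus_distrib[OF w w p])
  also have "p \<bullet> (w - p) = p \<bullet> w - p \<bullet> p" by (rule scalar_prod_minus_distrib[OF p w p])
  also have "p \<bullet> w = w \<bullet> p" by (rule comm_scalar_prod[OF p w])
  finally have e3: "(w - p) \<bullet> (w - p) = v \<bullet> v - u \<bullet> u" unfolding e2 wp pp by simp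
  have vpos: "v \<bullet> v > 0"
  proof -
    have "v \<bullet> v \<noteq> 0" using real_vec_sq0[OF v(1)] v(2) by auto
    moreover have "v \<bullet> v \<ge> 0" using conjugate_square_ge_0_vec[of v] by simp
    ultimately show ?thesis by auto
  qed
  have dd: "(w - p) \<bullet> (w - p) \<ge> 0" using conjugate_square_ge_0_vec[of "w - p"] by simp
  have "(w - p) \<bullet> (w - p) = (1 - t) * (v \<bullet> v)" unfolding e3 e1[symmetric] by (simp add: algebra_simps)
  also have "\<dots> \<le> 0" using t1 vpos by (intro mult_nonpos_nonneg, auto)
  finally have "(w - p) \<bullet> (w - p) = 0" using dd by auto
  hence wp0: "w - p = 0\<^sub>v m" by (rule real_vec_sq0[rotated], insert w p, auto)
  have wp_eq: "w = p"
  proof (rule eq_vecI)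
    fix i assume "i < dim_vec p" hence i: "i < m" using p by auto
    have "(w - p) $ i = 0" unfolding wp0 using i by simp
    thus "w $ i = p $ i" using i w p by simp
  qed (insert w p, auto)
  have x: "(- u) @\<^sub>v v \<in> carrier_vec (dim_col (hcat A1 A2))"
    using u v A1 A2 by (simp add: hcat_def)
  have "hcat A1 A2 *\<^sub>v ((- u) @\<^sub>v v) = A1 *\<^sub>v (- u) + A2 *\<^sub>v v"
    by (rule hcat_mult_vec[OF A1 A2], insert u v, auto)
  also have "\<dots> = 0\<^sub>v m"
  proof (rule eq_vecI)
    fix i assume "i < dim_vec (0\<^sub>v m :: real vec)" hence i: "i < m" by simp
    have "(A1 *\<^sub>v (- u)) $ i = - p $ i" unfolding p_def using A1 u i
      by (simp add: scalar_prod_uminus_right)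
    moreover have "(A2 *\<^sub>v v) $ i = w $ i" unfolding w_def ..
    ultimately show "(A1 *\<^sub>v (- u) + A2 *\<^sub>v v) $ i = 0\<^sub>v m $ i" using i A1 A2 wp_eq by simp
  qed (insert A1 A2, auto)
  finally have z: "hcat A1 A2 *\<^sub>v ((- u) @\<^sub>v v) = 0\<^sub>v (dim_row (hcat A1 A2))"
    using A1 by (simp add: hcat_def)
  have "(- u) @\<^sub>v v = 0\<^sub>v (dim_col (hcat A1 A2))"
    using fcr x z unfolding full_column_rank_def by blast
  also have "dim_col (hcat A1 A2) = n1 + n2" using A1 A2 by (simp add: hcat_def)
  finally have h: "(- u) @\<^sub>v v = 0\<^sub>v (n1 + n2)" .
  have "0\<^sub>v (n1 + n2) = (0\<^sub>v n1 @\<^sub>v 0\<^sub>v n2 :: real vec)" by (rule eq_vecI, auto)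
  with h have "(- u) @\<^sub>v v = 0\<^sub>v n1 @\<^sub>v 0\<^sub>v n2" by simp
  hence "v = 0\<^sub>v n2" using u by (subst (asm) append_vec_eq[of _ n1], auto)
  with v show False by auto
qed

definition Mblk :: "complex mat \<Rightarrow> complex \<Rightarrow> complex mat" where
  "Mblk K w = four_block_mat ((1 - w) \<cdot>\<^sub>m 1\<^sub>m (dim_col K)) ((- w) \<cdot>\<^sub>m transpose_mat K)
     ((- (w * (1 - w))) \<cdot>\<^sub>m K) ((1 - w) \<cdot>\<^sub>m 1\<^sub>m (dim_row K) + (w * w) \<cdot>\<^sub>m (K * transpose_mat K))"

lemma map_smult_cr: "map_mat cr (a \<cdot>\<^sub>m A) = cr a \<cdot>\<^sub>m map_mat cr A"
  by (rule eq_matI, auto)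

lemma map_add_cr: "A \<in> carrier_mat n m \<Longrightarrow> B \<in> carrier_mat n m \<Longrightarrow> map_mat cr (A + B) = map_mat cr A + map_mat cr B"
  by (rule eq_matI, auto)

lemma map_iterM:
  fixes C :: "real mat"
  assumes C: "C \<in> carrier_mat n2 n1"
  shows "map_mat cr (iterM C a a) = Mblk (map_mat cr C) (cr a)"
proof -
  have CC: "map_mat cr (C * transpose_mat C) = map_mat cr C * transpose_mat (map_mat cr C)"
    using of_real_hom.mat_hom_mult[OF C, of "transpose_mat C" n2] C by (simp add: map_mat_transpose)
  have S: "map_mat cr ((1 - a) \<cdot>\<^sub>m 1\<^sub>m n2 + (a * a) \<cdot>\<^sub>m (C * transpose_mat C)) = (1 - cr a) \<cdot>\<^sub>m 1\<^sub>m n2 + (cr a * cr a) \<cdot>\<^sub>m (map_mat cr C * transpose_mat (map_mat cr C))"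
    unfolding CC[symmetric] by (rule eq_matI, insert C, auto)
  have "map_mat cr (iterM C a a) = four_block_mat
     (map_mat cr ((1 - a) \<cdot>\<^sub>m 1\<^sub>m n1)) (map_mat cr (- a \<cdot>\<^sub>m transpose_mat C))
     (map_mat cr (- (a * (1 - a)) \<cdot>\<^sub>m C)) (map_mat cr ((1 - a) \<cdot>\<^sub>m 1\<^sub>m n2 + (a * a) \<cdot>\<^sub>m (C * transpose_mat C)))"
    unfolding iterM_def Let_def using C by (subst map_four_block_mat[of _ n1 n1 _ n2 _ n2], auto)
  also have "\<dots> = Mblk (map_mat cr C) (cr a)"
    unfolding Mblk_def S map_smult_cr of_real_hom.mat_hom_one map_mat_transpose using C by simp
  finally show ?thesis .
qed

lemma Mblk_carrier: "K \<in> carrier_mat n2 n1 \<Longrightarrow> Mblk K w \<in> carrier_mat (n1 + n2) (n1 + n2)"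
  unfolding Mblk_def by (rule four_block_carrier_mat, auto)

lemma smult_mat_vec:
  assumes A: "A \<in> carrier_mat nr nc" and v: "v \<in> carrier_vec nc"
  shows "(k \<cdot>\<^sub>m A) *\<^sub>v v = (k :: 'a :: comm_ring_1) \<cdot>\<^sub>v (A *\<^sub>v v)"
  by (rule eq_vecI, insert A v, auto simp: scalar_prod_def sum_distrib_left ac_simps)

lemma Mblk_mult:
  assumes K: "K \<in> carrier_mat n2 n1" and x: "x \<in> carrier_vec n1" and y: "y \<in> carrier_vec n2"
  shows "Mblk K w *\<^sub>v (x @\<^sub>v y) =
    ((1 - w) \<cdot>\<^sub>v x + (- w) \<cdot>\<^sub>v (transpose_mat K *\<^sub>v y)) @\<^sub>v
    ((- (w * (1 - w))) \<cdot>\<^sub>v (K *\<^sub>v x) + ((1 - w) \<cdot>\<^sub>v y + (w * w) \<cdot>\<^sub>v (K *\<^sub>v (transpose_mat K *\<^sub>v y))))"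
proof -
  have Kt: "transpose_mat K \<in> carrier_mat n1 n2" using K by auto
  have KK: "K * transpose_mat K \<in> carrier_mat n2 n2" using K by auto
  have "Mblk K w *\<^sub>v (x @\<^sub>v y) = (((1 - w) \<cdot>\<^sub>m 1\<^sub>m n1) *\<^sub>v x + ((- w) \<cdot>\<^sub>m transpose_mat K) *\<^sub>v y) @\<^sub>v
     (((- (w * (1 - w))) \<cdot>\<^sub>m K) *\<^sub>v x + ((1 - w) \<cdot>\<^sub>m 1\<^sub>m n2 + (w * w) \<cdot>\<^sub>m (K * transpose_mat K)) *\<^sub>v y)"
    unfolding Mblk_def using K by (subst four_block_mat_mult_vec[of _ n1 n1 _ n2 _ n2], insert x y, auto)
  also have "((1 - w) \<cdot>\<^sub>m 1\<^sub>m n2 + (w * w) \<cdot>\<^sub>m (K * transpose_mat K)) *\<^sub>v y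
     = ((1 - w) \<cdot>\<^sub>m 1\<^sub>m n2) *\<^sub>v y + ((w * w) \<cdot>\<^sub>m (K * transpose_mat K)) *\<^sub>v y"
    by (rule add_mult_distrib_mat_vec[OF smult_carrier_mat[OF one_carrier_mat] smult_carrier_mat[OF KK] y])
  also have "((1 - w) \<cdot>\<^sub>m 1\<^sub>m n2) *\<^sub>v y = (1 - w) \<cdot>\<^sub>v y"
    using smult_mat_vec[OF one_carrier_mat y] y by simp
  also have "((w * w) \<cdot>\<^sub>m (K * transpose_mat K)) *\<^sub>v y = (w * w) \<cdot>\<^sub>v (K *\<^sub>v (transpose_mat K *\<^sub>v y))"
    using smult_mat_vec[OF KK y] assoc_mult_mat_vec[OF K Kt y] by simp
  also have "((1 - w) \<cdot>\<^sub>m 1\<^sub>m n1) *\<^sub>v x = (1 - w) \<cdot>\<^sub>v x"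
    using smult_mat_vec[OF one_carrier_mat x] x by simp
  also have "((- w) \<cdot>\<^sub>m transpose_mat K) *\<^sub>v y = (- w) \<cdot>\<^sub>v (transpose_mat K *\<^sub>v y)"
    using smult_mat_vec[OF Kt y] by simp
  also have "((- (w * (1 - w))) \<cdot>\<^sub>m K) *\<^sub>v x = (- (w * (1 - w))) \<cdot>\<^sub>v (K *\<^sub>v x)"
    using smult_mat_vec[OF K x] by simp
  finally show ?thesis .
qed

lemma smult_append_vec: "a \<cdot>\<^sub>v (x @\<^sub>v y) = (a \<cdot>\<^sub>v x) @\<^sub>v (a \<cdot>\<^sub>v y)"
  by (rule eq_vecI, auto)

lemma construct_eig:
  fixes K :: "complex mat"
  assumes K: "K \<in> carrier_mat n2 n1" and v: "v \<in> carrier_vec n2" "v \<noteq> 0\<^sub>v n2"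
    and Kv: "K *\<^sub>v (transpose_mat K *\<^sub>v v) = l \<cdot>\<^sub>v v"
    and hq: "(lam + w - 1)^2 = w^2 * lam * l" and d0: "lam + w - 1 \<noteq> 0"
  shows "eigenvalue (Mblk K w) lam"
proof -
  define d where "d = lam + w - 1"
  have d: "d \<noteq> 0" using d0 unfolding d_def .
  have hq': "d * d = w * w * lam * l" using hq unfolding d_def by (simp add: power2_eq_square)
  define u where "u = transpose_mat K *\<^sub>v v"
  have u: "u \<in> carrier_vec n1" using K v unfolding u_def by auto
  define x where "x = (- w / d) \<cdot>\<^sub>v u"
  have x: "x \<in> carrier_vec n1" using u unfolding x_def by auto
  have "K *\<^sub>v x = (- w / d) \<cdot>\<^sub>v (K *\<^sub>v u)" unfolding x_def by (rule mult_mat_vec[OF K u])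
  also have "K *\<^sub>v u = l \<cdot>\<^sub>v v" unfolding u_def by (rule Kv)
  finally have Kx: "K *\<^sub>v x = ((- w / d) * l) \<cdot>\<^sub>v v" by (metis smult_smult_assoc)
  have dm: "dim_row (Mblk K w) = n1 + n2" using Mblk_carrier[OF K, of w] by auto
  have z: "x @\<^sub>v v \<in> carrier_vec (dim_row (Mblk K w))" unfolding dm using x v by auto
  have zn: "x @\<^sub>v v \<noteq> 0\<^sub>v (dim_row (Mblk K w))"
  proof
    assume h: "x @\<^sub>v v = 0\<^sub>v (dim_row (Mblk K w))"
    have "0\<^sub>v (dim_row (Mblk K w)) = (0\<^sub>v n1 @\<^sub>v 0\<^sub>v n2 :: complex vec)"
      unfolding dm by (intro eq_vecI, auto)
    with h have "x @\<^sub>v v = 0\<^sub>v n1 @\<^sub>v 0\<^sub>v n2" by simp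
    hence "v = 0\<^sub>v n2" using x by (subst (asm) append_vec_eq[of _ n1], auto)
    with v show False by auto
  qed
  have "Mblk K w *\<^sub>v (x @\<^sub>v v) =
    ((1 - w) \<cdot>\<^sub>v x + (- w) \<cdot>\<^sub>v u) @\<^sub>v
    ((- (w * (1 - w))) \<cdot>\<^sub>v (K *\<^sub>v x) + ((1 - w) \<cdot>\<^sub>v v + (w * w) \<cdot>\<^sub>v (l \<cdot>\<^sub>v v)))"
    unfolding Mblk_mult[OF K x v(1)] u_def Kv ..
  also have "(1 - w) \<cdot>\<^sub>v x + (- w) \<cdot>\<^sub>v u = lam \<cdot>\<^sub>v x"
  proof (rule eq_vecI)
    fix i assume "i < dim_vec (lam \<cdot>\<^sub>v x)" hence i: "i < n1" using x by auto
    have "(1 - w) * (- w / d * u $ i) + - w * u $ i = lam * (- w / d * u $ i)"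
      using d unfolding d_def by (simp add: field_simps)
    thus "((1 - w) \<cdot>\<^sub>v x + (- w) \<cdot>\<^sub>v u) $ i = (lam \<cdot>\<^sub>v x) $ i"
      using i u unfolding x_def by simp
  qed (insert x u, auto)
  also have "(- (w * (1 - w))) \<cdot>\<^sub>v (K *\<^sub>v x) + ((1 - w) \<cdot>\<^sub>v v + (w * w) \<cdot>\<^sub>v (l \<cdot>\<^sub>v v)) = lam \<cdot>\<^sub>v v"
  proof (rule eq_vecI)
    fix i assume "i < dim_vec (lam \<cdot>\<^sub>v v)" hence i: "i < n2" using v by auto
    have e: "- (w * (1 - w)) * (- w / d * l) + (1 - w) + w * w * l = lam"
    proof -
      have "(- (w * (1 - w)) * (- w / d * l) + (1 - w) + w * w * l) * d
         = w * w * l * (1 - w + d) + (1 - w) * d" using d by (simp add: field_simps)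
      also have "\<dots> = d * d + (1 - w) * d" using hq' unfolding d_def by (simp add: algebra_simps)
      also have "\<dots> = lam * d" unfolding d_def by (simp add: algebra_simps)
      finally show ?thesis using d by simp
    qed
    show "((- (w * (1 - w))) \<cdot>\<^sub>v (K *\<^sub>v x) + ((1 - w) \<cdot>\<^sub>v v + (w * w) \<cdot>\<^sub>v (l \<cdot>\<^sub>v v))) $ i = (lam \<cdot>\<^sub>v v) $ i"
      using i v K unfolding Kx by (simp add: e[symmetric] algebra_simps)
  qed (insert v K x, auto)
  finally have "Mblk K w *\<^sub>v (x @\<^sub>v v) = lam \<cdot>\<^sub>v (x @\<^sub>v v)" unfolding smult_append_vec .
  thus ?thesis using z zn unfolding eigenvalue_def eigenvector_def by auto
qed

lemma aux1: fixes w k c lam Y :: complex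
  assumes h: "(-(w*(1-w)))*k + ((1-w)*Y + w*w*(c*k)) = lam*Y" and wc: "w*w*c = w*(1-w-lam)"
  shows "(lam+w-1)*Y = -(w*lam)*k"
proof -
  have "w*w*(c*k) = w*(1-w-lam)*k" using wc by (metis mult.assoc)
  with h have "lam*Y = (-(w*(1-w)))*k + ((1-w)*Y + w*(1-w-lam)*k)" by simp
  thus ?thesis by (simp add: algebra_simps)
qed

lemma eig_analysis:
  fixes K :: "complex mat"
  assumes K: "K \<in> carrier_mat n2 n1" and w: "w \<noteq> 0"
    and ev: "eigenvalue (Mblk K w) lam"
  shows "lam = 1 - w \<or> lam = 0 \<or> (\<exists>t. eigenvalue (transpose_mat K * K) t \<and> (lam + w - 1)^2 = w^2 * lam * t)"
proof -
  have dm: "dim_row (Mblk K w) = n1 + n2" using Mblk_carrier[OF K, of w] by auto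
  from ev obtain z where z: "z \<in> carrier_vec (n1 + n2)" "z \<noteq> 0\<^sub>v (n1 + n2)"
    and eq: "Mblk K w *\<^sub>v z = lam \<cdot>\<^sub>v z" unfolding eigenvalue_def eigenvector_def dm by auto
  define x where "x = vec_first z n1"
  define y where "y = vec_last z n2"
  have x: "x \<in> carrier_vec n1" and y: "y \<in> carrier_vec n2" unfolding x_def y_def by auto
  have zxy: "z = x @\<^sub>v y" unfolding x_def y_def using z by simp
  have Kt: "transpose_mat K \<in> carrier_mat n1 n2" using K by auto
  define d where "d = lam + w - 1"
  from eq[unfolded zxy Mblk_mult[OF K x y] smult_append_vec]
  have E: "(1 - w) \<cdot>\<^sub>v x + (- w) \<cdot>\<^sub>v (transpose_mat K *\<^sub>v y) = lam \<cdot>\<^sub>v x \<and>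
    (- (w * (1 - w))) \<cdot>\<^sub>v (K *\<^sub>v x) + ((1 - w) \<cdot>\<^sub>v y + (w * w) \<cdot>\<^sub>v (K *\<^sub>v (transpose_mat K *\<^sub>v y))) = lam \<cdot>\<^sub>v y"
    by (subst (asm) append_vec_eq[of _ n1], insert x y K, auto)
  define c where "c = (1 - w - lam) / w"
  have Kty: "transpose_mat K *\<^sub>v y = c \<cdot>\<^sub>v x"
  proof (rule eq_vecI)
    fix i assume "i < dim_vec (c \<cdot>\<^sub>v x)" hence i: "i < n1" using x by auto
    have "((1 - w) \<cdot>\<^sub>v x + (- w) \<cdot>\<^sub>v (transpose_mat K *\<^sub>v y)) $ i = (lam \<cdot>\<^sub>v x) $ i" using E by simp
    hence "(1 - w) * x $ i + (- w) * (transpose_mat K *\<^sub>v y) $ i = lam * x $ i" using i x K y by simp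
    thus "(transpose_mat K *\<^sub>v y) $ i = (c \<cdot>\<^sub>v x) $ i" using i x w unfolding c_def
      by (simp add: field_simps)
  qed (insert x K, auto)
  have KKty: "K *\<^sub>v (transpose_mat K *\<^sub>v y) = c \<cdot>\<^sub>v (K *\<^sub>v x)" unfolding Kty by (rule mult_mat_vec[OF K x])
  have dy: "d \<cdot>\<^sub>v y = (- (w * lam)) \<cdot>\<^sub>v (K *\<^sub>v x)"
  proof (rule eq_vecI)
    fix i assume "i < dim_vec ((- (w * lam)) \<cdot>\<^sub>v (K *\<^sub>v x))" hence i: "i < n2" using K by auto
    have "((- (w * (1 - w))) \<cdot>\<^sub>v (K *\<^sub>v x) + ((1 - w) \<cdot>\<^sub>v y + (w * w) \<cdot>\<^sub>v (K *\<^sub>v (transpose_mat K *\<^sub>v y)))) $ i = (lam \<cdot>\<^sub>v y) $ i" using E by simp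
    hence "(- (w * (1 - w))) * (K *\<^sub>v x) $ i + ((1 - w) * y $ i + (w * w) * (c * (K *\<^sub>v x) $ i)) = lam * y $ i"
      unfolding KKty using i x K y by simp
    moreover have wc: "w * w * c = w * (1 - w - lam)" unfolding c_def using w by (simp add: field_simps)
    ultimately have "d * y $ i = (- (w * lam)) * (K *\<^sub>v x) $ i" unfolding d_def by (rule aux1)
    thus "(d \<cdot>\<^sub>v y) $ i = ((- (w * lam)) \<cdot>\<^sub>v (K *\<^sub>v x)) $ i" using i y K by simp
  qed (insert y K, auto)
  show ?thesis
  proof (cases "x = 0\<^sub>v n1")
    case True
    hence "K *\<^sub>v x = 0\<^sub>v n2" using K by auto
    hence "d \<cdot>\<^sub>v y = 0\<^sub>v n2" unfolding dy by auto
    moreover have "y \<noteq> 0\<^sub>v n2"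
    proof
      assume "y = 0\<^sub>v n2"
      hence "z = 0\<^sub>v n1 @\<^sub>v 0\<^sub>v n2" unfolding zxy True by simp
      also have "\<dots> = 0\<^sub>v (n1 + n2)" by (rule eq_vecI, auto)
      finally show False using z by auto
    qed
    ultimately have "d = 0"
    proof -
      assume dy0: "d \<cdot>\<^sub>v y = 0\<^sub>v n2" and ynz: "y \<noteq> 0\<^sub>v n2"
      obtain i where i: "i < n2" and yi: "y $ i \<noteq> 0"
      proof (rule ccontr)
        assume "\<not> thesis"
        hence "\<forall>i < n2. y $ i = 0" using that by blast
        hence "y = 0\<^sub>v n2" using y by (intro eq_vecI, auto)
        with ynz show False by auto
      qed
      have "(d \<cdot>\<^sub>v y) $ i = 0" unfolding dy0 using i by simp
      hence "d * y $ i = 0" using i y by simp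
      with yi show "d = 0" by simp
    qed
    thus ?thesis unfolding d_def by (auto simp: algebra_simps)
  next
    case xnz: False
    show ?thesis
    proof (cases "lam = 0")
      case True thus ?thesis by auto
    next
      case lnz: False
      define t where "t = d * d / (w * w * lam)"
      have "transpose_mat K *\<^sub>v (d \<cdot>\<^sub>v y) = d \<cdot>\<^sub>v (c \<cdot>\<^sub>v x)"
        unfolding mult_mat_vec[OF Kt y] Kty ..
      also have "transpose_mat K *\<^sub>v (d \<cdot>\<^sub>v y) = (- (w * lam)) \<cdot>\<^sub>v (transpose_mat K *\<^sub>v (K *\<^sub>v x))"
        unfolding dy by (rule mult_mat_vec[OF Kt], insert K x, auto)
      finally have h: "(- (w * lam)) \<cdot>\<^sub>v ((transpose_mat K * K) *\<^sub>v x) = d \<cdot>\<^sub>v (c \<cdot>\<^sub>v x)"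
        using assoc_mult_mat_vec[OF Kt K x] by simp
      have "(transpose_mat K * K) *\<^sub>v x = t \<cdot>\<^sub>v x"
      proof (rule eq_vecI)
        fix i assume "i < dim_vec (t \<cdot>\<^sub>v x)" hence i: "i < n1" using x by auto
        have "((- (w * lam)) \<cdot>\<^sub>v ((transpose_mat K * K) *\<^sub>v x)) $ i = (d \<cdot>\<^sub>v (c \<cdot>\<^sub>v x)) $ i" using h by simp
        hence "(- (w * lam)) * ((transpose_mat K * K) *\<^sub>v x) $ i = d * (c * x $ i)" using i x K by simp
        thus "((transpose_mat K * K) *\<^sub>v x) $ i = (t \<cdot>\<^sub>v x) $ i" using i x w lnz unfolding t_def c_def d_def
          by (simp add: field_simps)
      qed (insert x K, auto)
      hence "eigenvalue (transpose_mat K * K) t" unfolding eigenvalue_def eigenvector_def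
        using x xnz K by (intro exI[of _ x], auto)
      moreover have "(lam + w - 1)^2 = w^2 * lam * t" unfolding t_def d_def using w lnz
        by (simp add: field_simps power2_eq_square)
      ultimately show ?thesis by auto
    qed
  qed
qed

lemma quad_mod:
  fixes lam :: complex and g t :: real
  assumes eq: "(lam + complex_of_real g - 1)^2 = (complex_of_real g)^2 * lam * complex_of_real t"
    and t: "0 \<le> t" and gt: "g^2 * t \<le> 4 * (g - 1)" and g: "g \<ge> 1"
  shows "cmod lam = g - 1"
proof -
  define a where "a = Re lam" define b where "b = Im lam"
  define p where "p = 2 * (g - 1) - g^2 * t"
  define c where "c = (g - 1)^2"
  have lam: "lam = Complex a b" unfolding a_def b_def by simp
  have eq2: "lam^2 + complex_of_real p * lam + complex_of_real c = 0"
    using eq unfolding p_def c_def by (simp add: algebra_simps power2_eq_square)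
  have re: "a^2 - b^2 + p * a + c = 0"
    using arg_cong[OF eq2, of Re] unfolding lam by (simp add: power2_eq_square)
  have im: "2 * a * b + p * b = 0"
    using arg_cong[OF eq2, of Im] unfolding lam by (simp add: power2_eq_square algebra_simps)
  have disc: "p^2 \<le> 4 * c"
  proof -
    have "4 * c - p^2 = g^2 * t * (4 * (g - 1) - g^2 * t)" unfolding p_def c_def
      by (simp add: algebra_simps power2_eq_square)
    also have "\<dots> \<ge> 0" using t gt by (intro mult_nonneg_nonneg, auto)
    finally show ?thesis by simp
  qed
  have sq: "a^2 + b^2 = c"
  proof (cases "b = 0")
    case False
    have "(2 * a + p) * b = 0" using im by (simp add: algebra_simps)
    hence "2 * a + p = 0" using False by simp
    hence a: "a = - p / 2" by simp
    have aa: "a * a = p * p / 4" unfolding a by simp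
    have pa: "p * a = - (p * p) / 2" unfolding a by simp
    have "b * b = a * a + p * a + c" using re by (simp add: power2_eq_square)
    thus ?thesis using aa pa by (simp add: power2_eq_square)
  next
    case True
    hence re': "a^2 + p * a + c = 0" using re by simp
    have "(2 * a + p)^2 = p^2 - 4 * c" using re' by (simp add: power2_eq_square algebra_simps)
    hence "(2 * a + p)^2 \<le> 0" using disc by simp
    hence "(2 * a + p)^2 = 0" using zero_le_power2[of "2 * a + p"] by linarith
    hence "2 * a + p = 0" by simp
    hence a: "a = - p / 2" by simp
    have aa: "a * a = p * p / 4" unfolding a by simp
    have pa: "p * a = - (p * p) / 2" unfolding a by simp
    show ?thesis using re' aa pa True by (simp add: power2_eq_square)
  qed
  have "cmod lam = sqrt (a^2 + b^2)" unfolding lam by (simp add: cmod_def)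
  also have "\<dots> = g - 1" unfolding sq c_def using g by simp
  finally show ?thesis .
qed

lemma big_root_real:
  fixes om g l :: real
  assumes g1: "1 < g" and g2: "g < 2" and hl: "g^2 * l = 4 * (g - 1)" and om: "0 < om" and omg: "om \<le> g"
  defines "p \<equiv> 2 * (om - 1) - om^2 * l"
  defines "D \<equiv> p^2 - 4 * (om - 1)^2"
  shows "D \<ge> 0" "(- p + sqrt D) / 2 \<ge> g - 1"
proof -
  have gpos: "g^2 > 0" using g1 by auto
  have "g^2 * l > 0" using hl g1 by simp
  hence lpos: "l > 0" using gpos by (simp add: zero_less_mult_iff)
  have "g^2 * D = om^2 * l * (om^2 * (4 * (g - 1)) - 4 * g^2 * (om - 1))"
    unfolding D_def p_def hl[symmetric] by (simp add: algebra_simps power2_eq_square)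
  also have "\<dots> = om^2 * l * 4 * ((om - g) * ((g - 1) * om - g))"
    by (simp add: algebra_simps power2_eq_square)
  finally have e1: "g^2 * D = om^2 * l * 4 * ((om - g) * ((g - 1) * om - g))" .
  have "(om - g) * ((g - 1) * om - g) \<ge> 0"
  proof (rule mult_nonpos_nonpos)
    show "om - g \<le> 0" using omg by simp
    have a1: "(g - 1) * om \<le> (g - 1) * g" using omg g1 by (intro mult_left_mono, auto)
    have a2: "(g - 1) * g = g * g - g" by (simp add: algebra_simps)
    have "g * g < 2 * g" using g1 g2 by simp
    thus "(g - 1) * om - g \<le> 0" using a1 a2 by linarith
  qed
  moreover have "0 \<le> om^2 * l * 4" using lpos by simp
  ultimately have "om^2 * l * 4 * ((om - g) * ((g - 1) * om - g)) \<ge> 0" by (simp only: mult_nonneg_nonneg)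
  hence "g^2 * D \<ge> 0" unfolding e1 .
  thus D: "D \<ge> 0" using gpos by (simp add: zero_le_mult_iff)
  define X where "X = g - 1"
  show "(- p + sqrt D) / 2 \<ge> g - 1"
  proof (cases "- p / 2 \<ge> X")
    case True
    have s0: "sqrt D / 2 \<ge> 0" using D by simp
    have "(- p + sqrt D) / 2 = - p / 2 + sqrt D / 2" by (simp add: field_simps)
    thus ?thesis using True s0 unfolding X_def by linarith
  next
    case False
    have "g^2 * (- p - 2 * X) = - 2 * g^2 * (om - 1) + om^2 * (4 * (g - 1)) - 2 * g^2 * (g - 1)"
      unfolding p_def X_def hl[symmetric] by (simp add: algebra_simps power2_eq_square)
    also have "\<dots> = 2 * ((om - g) * (2 * (g - 1) * om - g * (2 - g)))"
      by (simp add: algebra_simps power2_eq_square)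
    finally have ev: "g^2 * (- p - 2 * X) = 2 * ((om - g) * (2 * (g - 1) * om - g * (2 - g)))" .
    have "- p - 2 * X < 0" using False by simp
    hence "g^2 * (- p - 2 * X) < 0" using gpos by (simp add: mult_pos_neg)
    hence neg: "(om - g) * (2 * (g - 1) * om - g * (2 - g)) < 0" unfolding ev by simp
    have omlt: "om < g" using neg omg by (cases "om = g", auto)
    have pos2: "2 * (g - 1) * om - g * (2 - g) > 0" using neg omlt by (simp add: mult_less_0_iff)
    have "g^2 * (X^2 + p * X + (om - 1)^2) = g^2 * X^2 + 2 * g^2 * (om - 1) * X - om^2 * X * (4 * (g - 1)) + g^2 * (om - 1)^2"
      unfolding p_def hl[symmetric] by (simp add: algebra_simps power2_eq_square)
    also have "\<dots> = (g - om) * (g - 2) * (g * (g - 2) + om * (3 * g - 2))"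
      unfolding X_def by (simp add: algebra_simps power2_eq_square)
    finally have ef: "g^2 * (X^2 + p * X + (om - 1)^2) = (g - om) * (g - 2) * (g * (g - 2) + om * (3 * g - 2))" .
    have "g * (g - 2) + om * (3 * g - 2) > 0"
    proof -
      have "om * (3 * g - 2) = 2 * (g - 1) * om + g * om" by (simp add: algebra_simps)
      moreover have "g * om > 0" using g1 om by simp
      ultimately show ?thesis using pos2 by (simp add: algebra_simps)
    qed
    moreover have "(g - om) * (g - 2) < 0" using omlt g2 by (simp add: mult_pos_neg)
    ultimately have "g^2 * (X^2 + p * X + (om - 1)^2) < 0" unfolding ef by (simp add: mult_neg_pos)
    hence fX: "X^2 + p * X + (om - 1)^2 < 0" using gpos by (simp add: mult_less_0_iff)
    have "(2 * X + p)^2 \<le> D" using fX unfolding D_def by (simp add: power2_eq_square algebra_simps)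
    hence "sqrt ((2 * X + p)^2) \<le> sqrt D" by (rule real_sqrt_le_mono)
    moreover have "2 * X + p > 0" using False by simp
    ultimately have "2 * X + p \<le> sqrt D" by simp
    thus ?thesis unfolding X_def by simp
  qed
qed

lemma quad_form:
  fixes lam :: complex and om l :: real
  shows "(lam + complex_of_real om - 1)^2 = (complex_of_real om)^2 * lam * complex_of_real l
    \<longleftrightarrow> lam^2 + complex_of_real (2 * (om - 1) - om^2 * l) * lam + complex_of_real ((om - 1)^2) = 0"
  by (simp add: algebra_simps power2_eq_square)

lemma exists_big_root:
  fixes om g l :: real
  assumes g1: "1 < g" and g2: "g < 2" and hl: "g^2 * l = 4 * (g - 1)" and om: "0 < om"
  shows "\<exists>lam :: complex. (lam + complex_of_real om - 1)^2 = (complex_of_real om)^2 * lam * complex_of_real l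
     \<and> lam + complex_of_real om - 1 \<noteq> 0 \<and> cmod lam \<ge> g - 1"
proof -
  define p where "p = 2 * (om - 1) - om^2 * l"
  define c where "c = (om - 1)^2"
  define D where "D = p^2 - 4 * c"
  have gpos: "g^2 > 0" using g1 by auto
  have "g^2 * l > 0" using hl g1 by simp
  hence lpos: "l > 0" using gpos by (simp add: zero_less_mult_iff)
  let ?P = "\<lambda>lam :: complex. (lam + complex_of_real om - 1)^2 = (complex_of_real om)^2 * lam * complex_of_real l"
  have nz: "lam + complex_of_real om - 1 \<noteq> 0" if "?P lam" "lam \<noteq> 0" for lam
  proof
    assume h: "lam + complex_of_real om - 1 = 0"
    with that(1) have "(complex_of_real om)^2 * lam * complex_of_real l = 0" by simp
    with om lpos that(2) show False by simp
  qed
  show ?thesis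
  proof (cases "om \<le> g")
    case True
    from big_root_real[OF g1 g2 hl om True] have D0: "D \<ge> 0" and r: "(- p + sqrt D) / 2 \<ge> g - 1"
      unfolding D_def p_def c_def by auto
    define r where "r = (- p + sqrt D) / 2"
    have "r^2 + p * r + c = 0"
    proof -
      have "2 * r + p = sqrt D" unfolding r_def by (simp add: field_simps)
      hence "(2 * r + p)^2 = D" using D0 by simp
      thus ?thesis unfolding D_def by (simp add: power2_eq_square algebra_simps)
    qed
    hence P: "?P (complex_of_real r)" unfolding quad_form p_def[symmetric] c_def[symmetric]
      by (metis (mono_tags, lifting) of_real_0 of_real_add of_real_mult of_real_power)
    have rpos: "r \<ge> g - 1" using r unfolding r_def .
    hence "r > 0" using g1 by simp
    hence "complex_of_real r \<noteq> 0" by simp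
    with P nz have "complex_of_real r + complex_of_real om - 1 \<noteq> 0" by blast
    moreover have "cmod (complex_of_real r) \<ge> g - 1" using rpos \<open>r > 0\<close> by simp
    ultimately show ?thesis using P by blast
  next
    case False
    define s where "s = csqrt (complex_of_real D)"
    define l1 where "l1 = (- complex_of_real p + s) / 2"
    define l2 where "l2 = (- complex_of_real p - s) / 2"
    have ss: "s * s = complex_of_real D" unfolding s_def by (metis power2_csqrt power2_eq_square)
    have root: "?P lam" if "lam = l1 \<or> lam = l2" for lam
    proof -
      have "2 * lam + complex_of_real p = s \<or> 2 * lam + complex_of_real p = - s"
        using that
      proof
        assume h: "lam = l1"
        have e: "2 * lam = - complex_of_real p + s" unfolding h l1_def by simp
        show ?thesis by (intro disjI1) (simp add: e)
      next
        assume h: "lam = l2"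
        have e: "2 * lam = - complex_of_real p - s" unfolding h l2_def by simp
        show ?thesis by (intro disjI2) (simp add: e)
      qed
      hence "(2 * lam + complex_of_real p)^2 = s * s" by (auto simp: power2_eq_square)
      hence "(2 * lam + complex_of_real p)^2 = complex_of_real D" using ss by simp
      hence "4 * (lam^2 + complex_of_real p * lam + complex_of_real c) = 0"
        unfolding D_def by (simp add: power2_eq_square algebra_simps)
      hence "lam^2 + complex_of_real p * lam + complex_of_real c = 0" by (simp only: mult_eq_0_iff) simp
      thus ?thesis unfolding quad_form p_def[symmetric] c_def[symmetric] .
    qed
    have prod: "l1 * l2 = complex_of_real c"
    proof -
      have "l1 * l2 = (complex_of_real p * complex_of_real p - s * s) / 4"
        unfolding l1_def l2_def by (simp add: algebra_simps)
      also have "\<dots> = complex_of_real c" unfolding ss D_def by (simp add: power2_eq_square)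
      finally show ?thesis .
    qed
    have "cmod l1 * cmod l2 = cmod (complex_of_real c)" using arg_cong[OF prod, of cmod] by (simp only: norm_mult)
    also have "\<dots> = c" unfolding norm_of_real c_def by simp
    finally have "cmod l1 * cmod l2 = c" .
    have om1: "om - 1 > g - 1" using False by simp
    obtain lam where lam: "lam = l1 \<or> lam = l2" and big: "cmod lam \<ge> om - 1"
    proof (cases "cmod l1 \<ge> om - 1")
      case True thus ?thesis using that by blast
    next
      case False
      have "cmod l2 \<ge> om - 1"
      proof (rule ccontr)
        assume "\<not> ?thesis"
        hence "cmod l1 * cmod l2 < (om - 1) * (om - 1)" using False om1 g1
          by (intro mult_strict_mono', auto)
        thus False using \<open>cmod l1 * cmod l2 = c\<close> unfolding c_def by (simp add: power2_eq_square)
      qed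
      thus ?thesis using that by blast
    qed
    have "lam \<noteq> 0" using big om1 g1 by auto
    with root[OF lam] nz have "lam + complex_of_real om - 1 \<noteq> 0" by blast
    thus ?thesis using root[OF lam] big om1 by (intro exI[of _ lam], auto)
  qed
qed


lemma sr_lb:
  fixes K :: "complex mat"
  assumes K: "K \<in> carrier_mat n2 n1" and n: "n1 + n2 > 0" and ev: "eigenvalue (Mblk K w) lam"
  shows "cmod lam \<le> spectral_radius (Mblk K w)"
  by (rule spectral_radius_mem_max(2)[OF Mblk_carrier[OF K] n], insert ev, auto simp: spectrum_def)

lemma KtK_eig:
  fixes C :: "real mat"
  assumes C: "C \<in> carrier_mat n2 n1" and nz: "C \<noteq> 0\<^sub>m n2 n1"
    and ev: "eigenvalue (transpose_mat (map_mat cr C) * map_mat cr C) t"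
  shows "t = cr (Re t) \<and> 0 \<le> Re t \<and> Re t \<le> lambda_max (C * transpose_mat C)"
proof -
  let ?K = "map_mat cr C"
  have K: "?K \<in> carrier_mat n2 n1" using C by auto
  have tK: "transpose_mat ?K = map_mat cr (transpose_mat C)" by (rule eq_matI, auto)
  have CtC: "transpose_mat ?K * ?K = map_mat cr (transpose_mat C * transpose_mat (transpose_mat C))"
    unfolding tK transpose_transpose by (rule of_real_hom.mat_hom_mult[symmetric], insert C, auto)
  from herm_eigenvalue[of "transpose_mat C" n1 n2 t] ev C have h: "Im t = 0" "Re t \<ge> 0"
    unfolding CtC by auto
  hence tr: "t = cr (Re t)" by (simp add: complex_eq_iff)
  have "Re t \<le> lambda_max (C * transpose_mat C)"
  proof (cases "Re t = 0")
    case True thus ?thesis using lambda_facts(3)[OF C nz] by simp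
  next
    case False
    from ev obtain x where x: "x \<in> carrier_vec n1" "x \<noteq> 0\<^sub>v n1" and eq: "(transpose_mat ?K * ?K) *\<^sub>v x = t \<cdot>\<^sub>v x"
      unfolding eigenvalue_def eigenvector_def using K by auto
    have Kt: "transpose_mat ?K \<in> carrier_mat n1 n2" using K by auto
    have eq': "transpose_mat ?K *\<^sub>v (?K *\<^sub>v x) = t \<cdot>\<^sub>v x" using eq assoc_mult_mat_vec[OF Kt K x(1)] by simp
    have Kx: "?K *\<^sub>v x \<in> carrier_vec n2" using K x by auto
    have Kxnz: "?K *\<^sub>v x \<noteq> 0\<^sub>v n2"
    proof
      assume "?K *\<^sub>v x = 0\<^sub>v n2"
      moreover have "transpose_mat ?K *\<^sub>v 0\<^sub>v n2 = 0\<^sub>v n1" using Kt by (intro eq_vecI, auto)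
      ultimately have tx: "t \<cdot>\<^sub>v x = 0\<^sub>v n1" using eq' by auto
      have tnz: "t \<noteq> 0" using False tr by (metis zero_complex.sel(1))
      have "x = 0\<^sub>v n1"
      proof (rule eq_vecI)
        fix i assume "i < dim_vec (0\<^sub>v n1 :: complex vec)" hence i: "i < n1" by simp
        have "(t \<cdot>\<^sub>v x) $ i = 0" unfolding tx using i by simp
        hence "t * x $ i = 0" using i x(1) by simp
        thus "x $ i = 0\<^sub>v n1 $ i" using tnz i by simp
      qed (insert x(1), auto)
      with x show False by auto
    qed
    have "(?K * transpose_mat ?K) *\<^sub>v (?K *\<^sub>v x) = ?K *\<^sub>v (transpose_mat ?K *\<^sub>v (?K *\<^sub>v x))"
      by (rule assoc_mult_mat_vec[OF K Kt Kx])
    also have "\<dots> = t \<cdot>\<^sub>v (?K *\<^sub>v x)" unfolding eq' by (rule mult_mat_vec[OF K x(1)])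
    finally have "eigenvalue (?K * transpose_mat ?K) t" unfolding eigenvalue_def eigenvector_def
      using Kx Kxnz K by (intro exI[of _ "?K *\<^sub>v x"], auto)
    moreover have "?K * transpose_mat ?K = map_mat cr (C * transpose_mat C)"
      unfolding tK by (rule of_real_hom.mat_hom_mult[symmetric], insert C, auto)
    ultimately have "eigenvalue (map_mat cr (C * transpose_mat C)) (cr (Re t))" using tr by simp
    from eigenvalue_real_of_complex[OF _ this, of n2] C
    have "eigenvalue (C * transpose_mat C) (Re t)" by auto
    thus ?thesis by (rule lambda_facts(2)[OF C nz])
  qed
  with h tr show ?thesis by auto
qed

theorem mainTheorem10:
  fixes A1 A2 :: "real mat" and m n1 n2 :: nat
  assumes "A1 \<in> carrier_mat m n1" and "A2 \<in> carrier_mat m n2"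
    and "full_column_rank (hcat A1 A2)"
    and "transpose_mat A1 * A1 = 1\<^sub>m n1"
    and "transpose_mat A2 * A2 = 1\<^sub>m n2"
    and "transpose_mat A2 * A1 \<noteq> 0\<^sub>m n2 n1"
  shows "let C = transpose_mat A2 * A1;
             g = 2 / (1 + sqrt (1 - lambda_max (C * transpose_mat C)))
         in g - 1 < rho (iterM C 1 1)
            \<and> g > 0
            \<and> rho (iterM C g g) = g - 1
            \<and> (\<forall>g1 > 0. rho (iterM C g g) \<le> rho (iterM C g1 g1))"
proof -
  note A1 = assms(1) and A2 = assms(2)
  define C where "C = transpose_mat A2 * A1"
  have C: "C \<in> carrier_mat n2 n1" using A1 A2 unfolding C_def by auto
  have nz: "C \<noteq> 0\<^sub>m n2 n1" using assms(6) unfolding C_def .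
  define l where "l = lambda_max (C * transpose_mat C)"
  have evl: "eigenvalue (C * transpose_mat C) l" using lambda_facts(1)[OF C nz] unfolding l_def .
  have lpos: "l > 0" using lambda_facts(3)[OF C nz] unfolding l_def .
  have l1: "l < 1" using lambda_lt_1[OF A1 A2 assms(3-5), of l] evl unfolding C_def by auto
  define s where "s = sqrt (1 - l)"
  have s0: "s > 0" and s1: "s < 1" using lpos l1 unfolding s_def by auto
  have ss: "s^2 = 1 - l" unfolding s_def using l1 by simp
  define g where "g = 2 / (1 + s)"
  have g1: "g > 1" and g2: "g < 2" using s0 s1 unfolding g_def by (auto simp: field_simps)
  have gm1: "g - 1 = (1 - s) / (1 + s)" unfolding g_def using s0 by (simp add: field_simps)
  have lfac: "l = (1 - s) * (1 + s)" using ss by (simp add: algebra_simps power2_eq_square)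
  have hl: "g^2 * l = 4 * (g - 1)"
  proof -
    have sp: "1 + s \<noteq> 0" using s0 by simp
    have "g^2 * l = (2 * 2) / ((1 + s) * (1 + s)) * ((1 - s) * (1 + s))"
      unfolding g_def lfac power2_eq_square by simp
    also have "\<dots> = 4 * (((1 - s) * (1 + s)) / ((1 + s) * (1 + s)))" by simp
    also have "((1 - s) * (1 + s)) / ((1 + s) * (1 + s)) = (1 - s) / (1 + s)"
      using sp by (rule mult_divide_mult_cancel_right)
    finally show ?thesis unfolding gm1 .
  qed
  have gl: "g - 1 < l"
  proof -
    have "g - 1 = (1 - s) / (1 + s)" by (rule gm1)
    also have "\<dots> < (1 - s) * (1 + s)"
    proof -
      have "s * s > 0" using s0 by simp
      moreover have "(1 + s) * (1 + s) = 1 + (s * s + 2 * s)" by (simp add: algebra_simps)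
      ultimately have "1 < (1 + s) * (1 + s)" using s0 by linarith
      hence a: "1 / (1 + s) < 1 + s" using s0 by (simp add: field_simps)
      have "(1 - s) / (1 + s) = (1 - s) * (1 / (1 + s))" by simp
      also have "\<dots> < (1 - s) * (1 + s)" using a s1 by (intro mult_strict_left_mono, auto)
      finally show ?thesis .
    qed
    also have "\<dots> = l" using ss by (simp add: algebra_simps power2_eq_square)
    finally show ?thesis .
  qed
  let ?K = "map_mat cr C"
  have K: "?K \<in> carrier_mat n2 n1" using C by auto
  have n: "n1 + n2 > 0" using nz C by (cases n2, auto)
  have tK: "transpose_mat ?K = map_mat cr (transpose_mat C)" by (rule eq_matI, auto)
  have KKt: "?K * transpose_mat ?K = map_mat cr (C * transpose_mat C)"
    unfolding tK by (rule of_real_hom.mat_hom_mult[symmetric], insert C, auto)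
  have S: "C * transpose_mat C \<in> carrier_mat n2 n2" using C by auto
  from evl obtain v where "eigenvector (C * transpose_mat C) v l" unfolding eigenvalue_def by auto
  from of_real_hom.eigenvector_hom[OF S this]
  have "eigenvector (?K * transpose_mat ?K) (map_vec cr v) (cr l)" unfolding KKt .
  hence vc: "map_vec cr v \<in> carrier_vec n2" "map_vec cr v \<noteq> 0\<^sub>v n2"
    and veq: "(?K * transpose_mat ?K) *\<^sub>v map_vec cr v = cr l \<cdot>\<^sub>v map_vec cr v"
    unfolding eigenvector_def using K by auto
  have Kv: "?K *\<^sub>v (transpose_mat ?K *\<^sub>v map_vec cr v) = cr l \<cdot>\<^sub>v map_vec cr v"
    using veq assoc_mult_mat_vec[OF K _ vc(1), of "transpose_mat ?K"] K by auto
  have rhoM: "rho (iterM C a a) = spectral_radius (Mblk ?K (cr a))" for a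
    unfolding rho_def map_iterM[OF C] ..
  have constr: "cmod lam \<le> rho (iterM C a a)"
    if "(lam + cr a - 1)^2 = (cr a)^2 * lam * cr l" "lam + cr a - 1 \<noteq> 0" for lam a
  proof -
    have "eigenvalue (Mblk ?K (cr a)) lam"
      by (rule construct_eig[OF K vc Kv], insert that, auto)
    thus ?thesis unfolding rhoM by (rule sr_lb[OF K n])
  qed
  have p1: "g - 1 < rho (iterM C 1 1)"
  proof -
    have "cmod (cr l) \<le> rho (iterM C 1 1)"
      by (rule constr, insert lpos, auto simp: power2_eq_square)
    thus ?thesis using gl lpos by simp
  qed
  have lb3: "g - 1 \<le> rho (iterM C g g)"
  proof -
    have "(cr (g - 1) + cr g - 1)^2 = (cr g)^2 * cr (g - 1) * cr l"
    proof -
      have "g^2 * (g - 1) * l = (g - 1) * (g^2 * l)" by (simp add: algebra_simps)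
      also have "\<dots> = (2 * g - 2)^2" unfolding hl by (simp add: power2_eq_square algebra_simps)
      finally have "(2 * g - 2)^2 = g^2 * (g - 1) * l" by simp
      hence "cr ((2 * g - 2)^2) = cr (g^2 * (g - 1) * l)" by simp
      thus ?thesis by (simp add: algebra_simps)
    qed
    moreover have "cr (g - 1) + cr g - 1 \<noteq> 0"
    proof -
      have "cr (g - 1) + cr g - 1 = cr (2 * g - 2)" by simp
      thus ?thesis using g1 by (simp only:) simp
    qed
    ultimately have "cmod (cr (g - 1)) \<le> rho (iterM C g g)" by (rule constr)
    moreover have "cmod (cr (g - 1)) = g - 1" unfolding norm_of_real using g1 by simp
    ultimately show ?thesis by simp
  qed
  have ub3: "rho (iterM C g g) \<le> g - 1"
  proof -
    have "spectral_radius (Mblk ?K (cr g)) \<in> norm ` spectrum (Mblk ?K (cr g))"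
      by (rule spectral_radius_mem_max(1)[OF Mblk_carrier[OF K] n])
    then obtain lam where lam: "lam \<in> spectrum (Mblk ?K (cr g))"
      and r: "spectral_radius (Mblk ?K (cr g)) = cmod lam" by blast
    have ev: "eigenvalue (Mblk ?K (cr g)) lam" using lam unfolding spectrum_def by simp
    have "cr g \<noteq> 0" using g1 by simp
    from eig_analysis[OF K this ev]
    have "cmod lam \<le> g - 1"
    proof (elim disjE exE conjE)
      assume "lam = 1 - cr g"
      hence "lam = cr (1 - g)" by simp
      hence "cmod lam = \<bar>1 - g\<bar>" by (simp only: norm_of_real)
      thus ?thesis using g1 by simp
    next
      assume "lam = 0" thus ?thesis using g1 by simp
    next
      fix t assume evt: "eigenvalue (transpose_mat ?K * ?K) t"
        and eq: "(lam + cr g - 1)^2 = (cr g)^2 * lam * t"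
      from KtK_eig[OF C nz evt] have tr: "t = cr (Re t)" and t0: "0 \<le> Re t" and tl: "Re t \<le> l"
        unfolding l_def by auto
      obtain rt where rt: "t = cr rt" using tr by blast
      have rtt: "Re t = rt" unfolding rt by simp
      have "g^2 * rt \<le> g^2 * l" using tl unfolding rtt by (intro mult_left_mono, auto)
      hence "g^2 * rt \<le> 4 * (g - 1)" using hl by simp
      from quad_mod[OF eq[unfolded rt] t0[unfolded rtt] this] g1 show ?thesis by simp
    qed
    thus ?thesis unfolding rhoM r .
  qed
  have p3: "rho (iterM C g g) = g - 1" using lb3 ub3 by simp
  have p4: "\<forall>g1 > 0. rho (iterM C g g) \<le> rho (iterM C g1 g1)"
  proof (intro allI impI)
    fix om :: real assume om: "om > 0"
    from exists_big_root[OF g1 g2 hl om] obtain lam where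
      "(lam + cr om - 1)^2 = (cr om)^2 * lam * cr l" "lam + cr om - 1 \<noteq> 0" and big: "cmod lam \<ge> g - 1"
      by auto
    from constr[OF this(1,2)] big p3 show "rho (iterM C g g) \<le> rho (iterM C om om)" by simp
  qed
  have gdef: "2 / (1 + sqrt (1 - lambda_max (C * transpose_mat C))) = g" unfolding g_def s_def l_def ..
  have g0: "g > 0" using g1 by simp
  show ?thesis unfolding Let_def C_def[symmetric] gdef
    by (intro conjI p1 p3 p4 g0)
qed

end
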